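(* Let $n_z\ge 2$ and let $\underline Z=\{Z_j: j=1,\dots,n_z\}$ be a set of real numbers with $0\in\underline Z$. Then the hybrid knowledge gradient satisfies $\mathrm{KG}_h(x)\ge 0$ for all $x\in X$, and if $x$ is sampled infinitely often then $\mathrm{KG}_h(x)=0$ (in the limit as the number of samples at $x$ tends to infinity).
   Context: Global optimization setting: an unknown function $f:X\to\mathbb{R}$ is observed with independent Gaussian noise of variance $\sigma_0^2>0$. After $n$ observations, a Gaussian process model has posterior mean $\mu^n$ and posterior covariance $k^n$. For a candidate sample location $x^{n+1}$ define $\tilde\sigma(x';x^{n+1})=k^n(x',x^{n+1})/\sqrt{k^n(x^{n+1},x^{n+1})+\sigma_0^2}$, so that the posterior mean after observing $y^{n+1}$ at $x^{n+1}$ is $\mu^{n+1}(x')=\mu^n(x')+\tilde\sigma(x';x^{n+1})Z$ with $Z\sim\mathcal N(0,1)$. Hybrid knowledge gradient: given fixed values $Z_1,\dots,Z_{n_z}$, for each $j$ let $x^*_j\in\operatorname{arg\,max}_{x'\in X}\big(\mu^n(x')+\tilde\sigma(x';x^{n+1})Z_j\big)$ and let $X^*_d=\{x^*_1,\dots,x^*_{n_z}\}$. With $\underline\mu^*=\mu^n(X^*_d)\in\mathbb{R}^{n_z}$ and $\underline{\tilde\sigma}^*(x^{n+1})=\tilde\sigma(X^*_d;x^{n+1})\in\mathbb{R}^{n_z}$ (componentwise), $$\mathrm{KG}_h(x^{n+1})=\mathbb{E}_{Z\sim\mathcal N(0,1)}\Big[\max_{j}\big(\underline\mu^*_j+\underline{\tilde\sigma}^*_j(x^{n+1})Z\big)\Big]-\max_j\underline\mu^*_j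 .$$ *)

theory Defs
  imports "HOL-Probability.Probability"
begin

definition pos_kernel :: "'a set \<Rightarrow> ('a \<Rightarrow> 'a \<Rightarrow> real) \<Rightarrow> bool" where
  "pos_kernel X k \<longleftrightarrow> (\<forall>a\<in>X. \<forall>b\<in>X. k a b = k b a) \<and>
     (\<forall>F c. finite F \<longrightarrow> F \<subseteq> X \<longrightarrow> (\<Sum>a\<in>F. \<Sum>b\<in>F. c a * c b * k a b) \<ge> 0)"

text \<open>GP posterior covariance after n observations at xs 0, ..., xs (n-1),
  noise variance s (sequential rank-one Bayesian update).\<close>
primrec post_cov :: "('a \<Rightarrow> 'a \<Rightarrow> real) \<Rightarrow> real \<Rightarrow> (nat \<Rightarrow> 'a) \<Rightarrow> nat \<Rightarrow> 'a \<Rightarrow> 'a \<Rightarrow> real" where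
  "post_cov k0 s xs 0 = k0"
| "post_cov k0 s xs (Suc n) =
     (\<lambda>a b. post_cov k0 s xs n a b
        - post_cov k0 s xs n a (xs n) * post_cov k0 s xs n (xs n) b
          / (post_cov k0 s xs n (xs n) (xs n) + s))"

primrec post_mean :: "('a \<Rightarrow> real) \<Rightarrow> ('a \<Rightarrow> 'a \<Rightarrow> real) \<Rightarrow> real \<Rightarrow> (nat \<Rightarrow> 'a) \<Rightarrow> (nat \<Rightarrow> real)
    \<Rightarrow> nat \<Rightarrow> 'a \<Rightarrow> real" where
  "post_mean m0 k0 s xs ys 0 = m0"
| "post_mean m0 k0 s xs ys (Suc n) =
     (\<lambda>a. post_mean m0 k0 s xs ys n a
        + post_cov k0 s xs n a (xs n) / (post_cov k0 s xs n (xs n) (xs n) + s)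
          * (ys n - post_mean m0 k0 s xs ys n (xs n)))"

definition sigt :: "('a \<Rightarrow> 'a \<Rightarrow> real) \<Rightarrow> real \<Rightarrow> 'a \<Rightarrow> 'a \<Rightarrow> real" where
  "sigt k s x' x = k x' x / sqrt (k x x + s)"

definition is_kg_argmax :: "'a set \<Rightarrow> ('a \<Rightarrow> real) \<Rightarrow> ('a \<Rightarrow> 'a \<Rightarrow> real) \<Rightarrow> real \<Rightarrow> 'a \<Rightarrow> real \<Rightarrow> 'a \<Rightarrow> bool" where
  "is_kg_argmax X mu k s x Z x' \<longleftrightarrow> x' \<in> X \<and>
     (\<forall>y\<in>X. mu y + sigt k s y x * Z \<le> mu x' + sigt k s x' x * Z)"

definition kg_h :: "('a \<Rightarrow> real) \<Rightarrow> ('a \<Rightarrow> 'a \<Rightarrow> real) \<Rightarrow> real \<Rightarrow> nat \<Rightarrow> (nat \<Rightarrow> 'a) \<Rightarrow> 'a \<Rightarrow> real" where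
  "kg_h mu k s nz xstar x =
     (LINT z|lborel. std_normal_density z *
        (MAX j\<in>{..<nz}. mu (xstar j) + sigt k s (xstar j) x * z))
     - (MAX j\<in>{..<nz}. mu (xstar j))"

end

theory Submission
  imports Defs
begin


lemma max_bounds:
  fixes a b :: "nat \<Rightarrow> real" and n :: nat and e z :: real
  assumes n: "n > 0" and e: "\<forall>j<n. \<bar>b j\<bar> \<le> e"
  shows "\<bar>(MAX j\<in>{..<n}. a j + b j * z) - (MAX j\<in>{..<n}. a j)\<bar> \<le> e * \<bar>z\<bar>"
    and "\<exists>j<n. (MAX j\<in>{..<n}. a j + b j * z) - (MAX j\<in>{..<n}. a j) \<ge> b j * z \<and> a j = (MAX j\<in>{..<n}. a j)"
proof -
  have ne: "{..<n} \<noteq> {}" using n by auto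
  obtain j0 where j0: "j0 < n" "a j0 = (MAX j\<in>{..<n}. a j)"
  proof -
    have "(MAX j\<in>{..<n}. a j) \<in> a ` {..<n}" using ne by (intro Max_in) auto
    then show ?thesis using that by auto
  qed
  have lo: "(MAX j\<in>{..<n}. a j + b j * z) \<ge> a j0 + b j0 * z"
    using j0(1) by (intro Max_ge) auto
  have bz: "\<bar>b j * z\<bar> \<le> e * \<bar>z\<bar>" if "j < n" for j
    using e that by (simp add: abs_mult mult_right_mono)
  have up: "(MAX j\<in>{..<n}. a j + b j * z) \<le> (MAX j\<in>{..<n}. a j) + e * \<bar>z\<bar>"
  proof (subst Max_le_iff, simp, use ne in simp, intro ballI)
    fix y assume "y \<in> (\<lambda>j. a j + b j * z) ` {..<n}"
    then obtain j where j: "j < n" "y = a j + b j * z" by auto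
    have "a j \<le> (MAX j\<in>{..<n}. a j)" using j by (intro Max_ge) auto
    then show "y \<le> (MAX j\<in>{..<n}. a j) + e * \<bar>z\<bar>" using bz[OF j(1)] j by linarith
  qed
  show "\<bar>(MAX j\<in>{..<n}. a j + b j * z) - (MAX j\<in>{..<n}. a j)\<bar> \<le> e * \<bar>z\<bar>"
    using lo up bz[OF j0(1)] j0 by linarith
  show "\<exists>j<n. (MAX j\<in>{..<n}. a j + b j * z) - (MAX j\<in>{..<n}. a j) \<ge> b j * z \<and> a j = (MAX j\<in>{..<n}. a j)"
    using lo j0 by force
qed

lemma kg_core:
  fixes a b :: "nat \<Rightarrow> real" and n :: nat and e :: real
  assumes n: "n > 0" and e: "\<forall>j<n. \<bar>b j\<bar> \<le> e"
  shows "0 \<le> (LINT z|lborel. std_normal_density z * (MAX j\<in>{..<n}. a j + b j * z)) - (MAX j\<in>{..<n}. a j)"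
    and "(LINT z|lborel. std_normal_density z * (MAX j\<in>{..<n}. a j + b j * z)) - (MAX j\<in>{..<n}. a j) \<le> e * sqrt (2 / pi)"
proof -
  define M where "M = (MAX j\<in>{..<n}. a j)"
  define g where "g = (\<lambda>z. (MAX j\<in>{..<n}. a j + b j * z) - M)"
  have gb: "\<bar>g z\<bar> \<le> e * \<bar>z\<bar>" for z unfolding g_def M_def by (rule max_bounds(1)[OF n e])
  obtain j0 where j0: "j0 < n" "a j0 = M" using max_bounds(2)[OF n e, of 0 a] unfolding M_def by auto
  have gl: "g z \<ge> b j0 * z" for z
  proof -
    obtain j where j: "j < n" "g z \<ge> b j * z" "a j = M"
      using max_bounds(2)[OF n e, of z a] unfolding g_def M_def by auto
    have "a j0 + b j0 * z \<le> (MAX j\<in>{..<n}. a j + b j * z)" using j0 by (intro Max_ge) auto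
    then show ?thesis using j0 unfolding g_def by linarith
  qed
  have meas: "g \<in> borel_measurable lborel" unfolding g_def by measurable
  have i1: "integrable lborel (\<lambda>z. std_normal_density z * \<bar>z\<bar>)"
    using integrable_std_normal_moment_abs[of 1] by simp
  have ig: "integrable lborel (\<lambda>z. std_normal_density z * g z)"
  proof (rule Bochner_Integration.integrable_bound[OF integrable_mult_right[OF i1, of e]])
    show "(\<lambda>z. std_normal_density z * g z) \<in> borel_measurable lborel" using meas by measurable
    show "AE z in lborel. norm (std_normal_density z * g z) \<le> norm (e * (std_normal_density z * \<bar>z\<bar>))"
    proof (rule AE_I2)
      fix z
      have "e \<ge> 0" using e n by (meson abs_ge_zero order_trans)
      then have "norm (std_normal_density z * g z) \<le> std_normal_density z * (e * \<bar>z\<bar>)"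
        using gb[of z] by (simp add: abs_mult mult_left_mono)
      also have "\<dots> = norm (e * (std_normal_density z * \<bar>z\<bar>))" using \<open>e \<ge> 0\<close> by (simp add: abs_mult)
      finally show "norm (std_normal_density z * g z) \<le> norm (e * (std_normal_density z * \<bar>z\<bar>))" .
    qed
  qed
  have eq: "(\<lambda>z. std_normal_density z * (MAX j\<in>{..<n}. a j + b j * z)) = (\<lambda>z. M * std_normal_density z + std_normal_density z * g z)"
    unfolding g_def by (auto simp: algebra_simps)
  have key: "(LINT z|lborel. std_normal_density z * (MAX j\<in>{..<n}. a j + b j * z)) - M = (LINT z|lborel. std_normal_density z * g z)"
  proof -
    have "(LINT z|lborel. M * std_normal_density z + std_normal_density z * g z) = (LINT z|lborel. M * std_normal_density z) + (LINT z|lborel. std_normal_density z * g z)"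
      using ig by (intro Bochner_Integration.integral_add) auto
    then show ?thesis unfolding eq by simp
  qed
  have "(LINT z|lborel. std_normal_density z * g z) \<ge> (LINT z|lborel. b j0 * (std_normal_density z * z))"
    using ig integrable_std_normal_moment[of 1] gl
  proof (intro Bochner_Integration.integral_mono)
    fix z
    have "std_normal_density z * (b j0 * z) \<le> std_normal_density z * g z"
      using gl[of z] by (intro mult_left_mono) auto
    then show "b j0 * (std_normal_density z * z) \<le> std_normal_density z * g z" by (simp add: algebra_simps)
  qed (use ig integrable_std_normal_moment[of 1] in auto)
  moreover have "(LINT z|lborel. b j0 * (std_normal_density z * z)) = 0"
    using integral_std_normal_moment_odd[of 0] by simp
  ultimately show "0 \<le> (LINT z|lborel. std_normal_density z * (MAX j\<in>{..<n}. a j + b j * z)) - (MAX j\<in>{..<n}. a j)"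
    using key M_def by (metis mult_zero_left mult_zero_right)
  have "(LINT z|lborel. std_normal_density z * g z) \<le> (LINT z|lborel. e * (std_normal_density z * \<bar>z\<bar>))"
  proof (intro Bochner_Integration.integral_mono ig)
    show "integrable lborel (\<lambda>z. e * (std_normal_density z * \<bar>z\<bar>))" using i1 by simp
    fix z
    have "g z \<le> e * \<bar>z\<bar>" using gb[of z] by linarith
    then show "std_normal_density z * g z \<le> e * (std_normal_density z * \<bar>z\<bar>)"
      by (metis mult.left_commute mult_left_mono normal_density_nonneg)
  qed
  moreover have "(LINT z|lborel. e * (std_normal_density z * \<bar>z\<bar>)) = e * sqrt (2 / pi)"
    using integral_std_normal_moment_abs_odd[of 0] by simp
  ultimately show "(LINT z|lborel. std_normal_density z * (MAX j\<in>{..<n}. a j + b j * z)) - (MAX j\<in>{..<n}. a j) \<le> e * sqrt (2 / pi)"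
    using key M_def by (metis mult_zero_left)
qed
lemma sum_restr: "finite G \<Longrightarrow> F \<subseteq> G \<Longrightarrow> (\<Sum>a\<in>G. if a\<in>F then f a else 0) = (\<Sum>a\<in>F. f a)"
  by (simp add: sum.inter_restrict[symmetric] Int_absorb1 inf.absorb2)

lemma pk_sym: "pos_kernel X k \<Longrightarrow> a \<in> X \<Longrightarrow> b \<in> X \<Longrightarrow> k a b = k b a"
  unfolding pos_kernel_def by blast

lemma pk_psd: "pos_kernel X k \<Longrightarrow> finite F \<Longrightarrow> F \<subseteq> X \<Longrightarrow> 0 \<le> (\<Sum>a\<in>F. \<Sum>b\<in>F. c a * c b * k a b)"
  unfolding pos_kernel_def by blast

lemma pk_quad:
  assumes pk: "pos_kernel X k" and F: "finite F" "F \<subseteq> X" and x: "x \<in> X"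
  shows "0 \<le> (\<Sum>a\<in>F. \<Sum>b\<in>F. c a * c b * k a b) + 2 * t * (\<Sum>a\<in>F. c a * k a x) + t^2 * k x x"
proof -
  define G where "G = insert x F"
  define c1 where "c1 a = (if a \<in> F then c a else 0)" for a
  define d where "d a = (if a = x then t else 0)" for a
  have sym: "k a b = k b a" if "a\<in>X" "b\<in>X" for a b by (rule pk_sym[OF pk that])
  have G: "finite G" "G \<subseteq> X" "x \<in> G" "F \<subseteq> G" using F x by (auto simp: G_def)
  have "0 \<le> (\<Sum>a\<in>G. \<Sum>b\<in>G. (c1 a + d a) * (c1 b + d b) * k a b)"
    by (rule pk_psd[OF pk G(1,2)])
  also have "\<dots> = (\<Sum>a\<in>G. \<Sum>b\<in>G. c1 a * c1 b * k a b) + (\<Sum>a\<in>G. \<Sum>b\<in>G. c1 a * d b * k a b)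
      + (\<Sum>a\<in>G. \<Sum>b\<in>G. d a * c1 b * k a b) + (\<Sum>a\<in>G. \<Sum>b\<in>G. d a * d b * k a b)"
  proof -
    have "(c1 a + d a) * (c1 b + d b) * k a b = c1 a * c1 b * k a b + c1 a * d b * k a b + d a * c1 b * k a b + d a * d b * k a b" for a b
      by (simp add: distrib_left distrib_right)
    then show ?thesis by (simp only: sum.distrib)
  qed
  also have "(\<Sum>a\<in>G. \<Sum>b\<in>G. c1 a * c1 b * k a b) = (\<Sum>a\<in>F. \<Sum>b\<in>F. c a * c b * k a b)"
  proof -
    have e1: "c1 a * c1 b * k a b = (if a\<in>F then (if b\<in>F then c a * c b * k a b else 0) else 0)" for a b
      by (simp add: c1_def)
    have e2: "(\<Sum>b\<in>G. if a\<in>F then (if b\<in>F then c a * c b * k a b else 0) else 0)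
       = (if a \<in> F then (\<Sum>b\<in>F. c a * c b * k a b) else 0)" for a
      using sum_restr[OF G(1) G(4), of "\<lambda>b. c a * c b * k a b"] by simp
    show ?thesis by (simp only: e1 e2 sum_restr[OF G(1) G(4)])
  qed
  also have "(\<Sum>a\<in>G. \<Sum>b\<in>G. c1 a * d b * k a b) = t * (\<Sum>a\<in>F. c a * k a x)"
  proof -
    have "(\<Sum>b\<in>G. c1 a * d b * k a b) = c1 a * t * k a x" for a
    proof -
      have "(\<Sum>b\<in>G. c1 a * d b * k a b) = (\<Sum>b\<in>G. if b = x then c1 a * t * k a x else 0)"
        by (rule sum.cong) (auto simp: d_def)
      also have "\<dots> = c1 a * t * k a x" using G(1,3) by simp
      finally show ?thesis .
    qed
    then have "(\<Sum>a\<in>G. \<Sum>b\<in>G. c1 a * d b * k a b) = (\<Sum>a\<in>G. c1 a * t * k a x)"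
      by simp
    also have "\<dots> = (\<Sum>a\<in>G. if a \<in> F then t * (c a * k a x) else 0)"
      by (intro sum.cong refl) (simp add: c1_def)
    finally show ?thesis using sum_restr[OF G(1) G(4)] by (simp add: sum_distrib_left)
  qed
  also have "(\<Sum>a\<in>G. \<Sum>b\<in>G. d a * c1 b * k a b) = t * (\<Sum>a\<in>F. c a * k a x)"
  proof -
    have "(\<Sum>a\<in>G. \<Sum>b\<in>G. d a * c1 b * k a b) = (\<Sum>a\<in>G. if a = x then (\<Sum>b\<in>G. t * c1 b * k x b) else 0)"
      by (rule sum.cong) (auto simp: d_def)
    also have "\<dots> = (\<Sum>b\<in>G. t * c1 b * k x b)" using G(1,3) by simp
    finally have "(\<Sum>a\<in>G. \<Sum>b\<in>G. d a * c1 b * k a b) = (\<Sum>b\<in>G. t * c1 b * k x b)" .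
    also have "\<dots> = (\<Sum>a\<in>G. if a \<in> F then t * (c a * k a x) else 0)"
      using G F sym[of x] by (intro sum.cong refl) (auto simp: c1_def)
    finally show ?thesis using sum_restr[OF G(1) G(4)] by (simp add: sum_distrib_left)
  qed
  also have "(\<Sum>a\<in>G. \<Sum>b\<in>G. d a * d b * k a b) = t^2 * k x x"
  proof -
    have "(\<Sum>a\<in>G. \<Sum>b\<in>G. d a * d b * k a b) = (\<Sum>a\<in>G. if a = x then (\<Sum>b\<in>G. if b = x then t * t * k x x else 0) else 0)"
      by (intro sum.cong refl) (auto simp: d_def intro!: sum.cong)
    also have "\<dots> = t^2 * k x x" using G(1,3) by (simp add: power2_eq_square)
    finally show ?thesis .
  qed
  finally show ?thesis by simp
qed

lemma quad_cs:
  fixes A B C :: real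
  assumes q: "\<And>t. 0 \<le> C + 2 * t * B + t^2 * A" and A0: "A \<ge> 0"
  shows "B^2 \<le> A * C"
proof -
  have C: "C \<ge> 0" using q[of 0] by simp
  show ?thesis
  proof (cases "A > 0")
    case True
    have "0 \<le> C + 2 * (-B/A) * B + (-B/A)^2 * A" by (rule q)
    also have "\<dots> = C - B^2 / A" using True by (simp add: field_simps power2_eq_square)
    finally show ?thesis using True by (simp add: field_simps)
  next
    case False
    have A: "A \<le> 0" using False by simp
    have "B = 0"
    proof (rule ccontr)
      assume B: "B \<noteq> 0"
      have "0 \<le> C + 2 * (-(C+1)/(2*B)) * B + (-(C+1)/(2*B))^2 * A" by (rule q)
      also have "\<dots> = -1 + (-(C+1)/(2*B))^2 * A" using B by (simp add: field_simps)
      also have "\<dots> \<le> -1" using A by (simp add: mult_nonneg_nonpos)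
      finally show False by simp
    qed
    then show ?thesis using A A0 C by simp
  qed
qed


lemma pk_diag: assumes "pos_kernel X k" "a \<in> X" shows "0 \<le> k a a"
  using pk_quad[OF assms(1), of "{}" a "\<lambda>_. 0" 1] assms by simp

lemma pk_cs: assumes pk: "pos_kernel X k" and ab: "a \<in> X" "b \<in> X"
  shows "(k a b)^2 \<le> k a a * k b b"
proof -
  have "(k a b)^2 \<le> k b b * k a a"
    using pk_quad[OF pk, of "{a}" b "\<lambda>_. 1"] ab by (intro quad_cs pk_diag[OF pk]) simp_all
  then show ?thesis by (simp add: mult.commute)
qed

lemma pk_step:
  assumes pk: "pos_kernel X k" and x: "x \<in> X" and s: "s > 0"
  shows "pos_kernel X (\<lambda>a b. k a b - k a x * k x b / (k x x + s))"
  unfolding pos_kernel_def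
proof (intro conjI allI impI ballI)
  fix a b assume ab: "a \<in> X" "b \<in> X"
  show "k a b - k a x * k x b / (k x x + s) = k b a - k b x * k x a / (k x x + s)"
    using pk_sym[OF pk] ab x by (metis mult.commute)
next
  fix F c assume F: "finite F" "F \<subseteq> X"
  define Q where "Q = (\<Sum>a\<in>F. \<Sum>b\<in>F. c a * c b * k a b)"
  define B where "B = (\<Sum>a\<in>F. c a * k a x)"
  define K where "K = k x x"
  have K: "K \<ge> 0" using pk_diag[OF pk x] K_def by simp
  have Q: "Q \<ge> 0" unfolding Q_def by (rule pk_psd[OF pk F])
  have cs: "B^2 \<le> K * Q"
    using pk_quad[OF pk F x, of c] using K unfolding Q_def B_def K_def by (intro quad_cs) simp_all
  have "(\<Sum>a\<in>F. \<Sum>b\<in>F. c a * c b * (k a b - k a x * k x b / (k x x + s)))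
      = Q - (\<Sum>a\<in>F. \<Sum>b\<in>F. (c a * k a x) * (c b * k b x)) / (K + s)"
  proof -
    have "(\<Sum>a\<in>F. \<Sum>b\<in>F. c a * c b * (k a b - k a x * k x b / (k x x + s)))
       = (\<Sum>a\<in>F. \<Sum>b\<in>F. c a * c b * k a b - (c a * k a x) * (c b * k b x) / (K + s))"
      using F x pk_sym[OF pk] K_def by (intro sum.cong refl) (auto simp: algebra_simps)
    also have "\<dots> = Q - (\<Sum>a\<in>F. \<Sum>b\<in>F. (c a * k a x) * (c b * k b x)) / (K + s)"
      unfolding Q_def by (simp add: sum_subtractf sum_divide_distrib)
    finally show ?thesis .
  qed
  also have "(\<Sum>a\<in>F. \<Sum>b\<in>F. (c a * k a x) * (c b * k b x)) = B^2"
    unfolding B_def power2_eq_square by (simp add: sum_product)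
  finally have eq: "(\<Sum>a\<in>F. \<Sum>b\<in>F. c a * c b * (k a b - k a x * k x b / (k x x + s))) = Q - B^2 / (K + s)" .
  have "B^2 / (K + s) \<le> K * Q / (K + s)" using cs K s by (intro divide_right_mono) auto
  also have "\<dots> \<le> Q" using K Q s by (simp add: divide_le_eq algebra_simps)
  finally show "0 \<le> (\<Sum>a\<in>F. \<Sum>b\<in>F. c a * c b * (k a b - k a x * k x b / (k x x + s)))"
    using eq by simp
qed

lemma pc_pos:
  assumes pk: "pos_kernel X k0" and s: "s > 0" and xs: "\<forall>n. xs n \<in> X"
  shows "pos_kernel X (post_cov k0 s xs n)"
proof (induction n)
  case 0 then show ?case using pk by simp
next
  case (Suc n) then show ?case using pk_step[OF Suc xs[rule_format] s] by simp
qed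

lemma pc_diag_dec:
  assumes pk: "pos_kernel X k0" and s: "s > 0" and xs: "\<forall>n. xs n \<in> X" and a: "a \<in> X"
  shows "post_cov k0 s xs (Suc n) a a \<le> post_cov k0 s xs n a a"
proof -
  let ?k = "post_cov k0 s xs n"
  have pk': "pos_kernel X ?k" by (rule pc_pos[OF pk s xs])
  have "?k a (xs n) * ?k (xs n) a = (?k a (xs n))^2"
    using pk_sym[OF pk' a xs[rule_format]] by (simp add: power2_eq_square)
  moreover have "?k (xs n) (xs n) + s > 0" using pk_diag[OF pk' xs[rule_format, of n]] s by simp
  ultimately have "?k a (xs n) * ?k (xs n) a / (?k (xs n) (xs n) + s) \<ge> 0" by simp
  then show ?thesis by simp
qed

lemma pc_diag_le:
  assumes pk: "pos_kernel X k0" and s: "s > 0" and xs: "\<forall>n. xs n \<in> X" and a: "a \<in> X"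
  shows "post_cov k0 s xs n a a \<le> k0 a a"
proof (induction n)
  case 0 then show ?case by simp
next
  case (Suc n) then show ?case using pc_diag_dec[OF pk s xs a, of n] by linarith
qed

lemma var_to_0:
  assumes pk: "pos_kernel X k0" and s: "s > 0" and xs: "\<forall>n. xs n \<in> X" and x: "x \<in> X"
    and inf: "infinite {n. xs n = x}"
  shows "(\<lambda>n. post_cov k0 s xs n x x) \<longlonglongrightarrow> 0"
proof -
  define v where "v n = post_cov k0 s xs n x x" for n
  define V where "V = k0 x x"
  have v0: "v n \<ge> 0" for n unfolding v_def by (rule pk_diag[OF pc_pos[OF pk s xs] x])
  have vV: "v n \<le> V" for n unfolding v_def V_def by (rule pc_diag_le[OF pk s xs x])
  have dec: "decseq v" unfolding v_def using pc_diag_dec[OF pk s xs x] by (intro decseq_SucI) auto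
  obtain L where L: "v \<longlonglongrightarrow> L" "\<forall>i. L \<le> v i" using decseq_convergent[OF dec, of 0] v0 by auto
  have L0: "L \<ge> 0" using L(1) v0 by (intro LIMSEQ_le_const) auto
  have step: "v n - v (Suc n) = (v n)^2 / (v n + s)" if "xs n = x" for n
  proof -
    have "v (Suc n) = v n - v n * v n / (v n + s)"
      unfolding v_def post_cov.simps(2) using that by simp
    then show ?thesis by (simp add: power2_eq_square)
  qed
  have "L = 0"
  proof (rule ccontr)
    assume "L \<noteq> 0"
    then have Lp: "L > 0" using L0 by simp
    define d where "d = L^2 / (V + s)"
    have Vs: "V + s > 0" using vV[of 0] v0[of 0] s by linarith
    have dp: "d > 0" unfolding d_def using Lp Vs by simp
    have "(\<lambda>n. v n - v (Suc n)) \<longlonglongrightarrow> L - L"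
      using L(1) LIMSEQ_Suc[OF L(1)] by (intro tendsto_diff)
    then have "\<forall>\<^sub>F n in sequentially. v n - v (Suc n) < d" using dp
      by (simp add: order_tendstoD(2))
    then obtain N where N: "\<And>n. n \<ge> N \<Longrightarrow> v n - v (Suc n) < d" by (auto simp: eventually_sequentially)
    obtain n where n: "n \<ge> N" "xs n = x" using inf by (auto simp: infinite_nat_iff_unbounded_le)
    have "d \<le> (v n)^2 / (v n + s)"
    proof -
      have "L^2 \<le> (v n)^2" using L(2) L0 by (intro power_mono) auto
      moreover have "v n + s \<le> V + s" using vV by simp
      moreover have "v n + s > 0" using v0[of n] s by simp
      ultimately show ?thesis unfolding d_def using Lp
        by (meson frac_le zero_le_power2)
    qed
    then show False using N[OF n(1)] step[OF n(2)] by simp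
  qed
  then show ?thesis using L(1) unfolding v_def by simp
qed

lemma sigt_bound:
  assumes pk: "pos_kernel X k0" and s: "s > 0" and xs: "\<forall>n. xs n \<in> X" and x: "x \<in> X" and a: "a \<in> X"
    and Bd: "\<forall>a\<in>X. k0 a a \<le> Bd" and Bd0: "Bd \<ge> 0"
  shows "\<bar>sigt (post_cov k0 s xs n) s a x\<bar> \<le> sqrt (Bd * post_cov k0 s xs n x x) / sqrt s"
proof -
  let ?k = "post_cov k0 s xs n"
  have pk': "pos_kernel X ?k" by (rule pc_pos[OF pk s xs])
  have vx: "?k x x \<ge> 0" by (rule pk_diag[OF pk' x])
  have va: "?k a a \<ge> 0" by (rule pk_diag[OF pk' a])
  have "?k a a \<le> Bd" using pc_diag_le[OF pk s xs a, of n] Bd a by fastforce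
  then have "?k a a * ?k x x \<le> Bd * ?k x x" using vx by (rule mult_right_mono)
  then have "(?k a x)^2 \<le> Bd * ?k x x"
    using pk_cs[OF pk' a x] by linarith
  then have num: "\<bar>?k a x\<bar> \<le> sqrt (Bd * ?k x x)" by (intro real_le_rsqrt) simp
  have den: "sqrt s \<le> sqrt (?k x x + s)" using vx by simp
  have "\<bar>sigt ?k s a x\<bar> = \<bar>?k a x\<bar> / sqrt (?k x x + s)" unfolding sigt_def using vx s by (simp add: abs_div)
  also have "\<dots> \<le> sqrt (Bd * ?k x x) / sqrt s"
    using num den s vx Bd0 by (intro frac_le) auto
  finally show ?thesis .
qed

theorem theorem3:
  fixes X :: "'a::metric_space set" and k0 :: "'a \<Rightarrow> 'a \<Rightarrow> real" and m0 :: "'a \<Rightarrow> real"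
    and s :: real and xs :: "nat \<Rightarrow> 'a" and ys :: "nat \<Rightarrow> real"
    and Zs :: "nat \<Rightarrow> real" and nz :: nat
  assumes X: "compact X"
    and k0_cont: "continuous_on (X \<times> X) (\<lambda>(a, b). k0 a b)"
    and k0_pos: "pos_kernel X k0"
    and noise: "s > 0"
    and xs_X: "\<forall>n. xs n \<in> X"
    and nz: "nz \<ge> 2"
    and zero: "0 \<in> Zs ` {..<nz}"
  shows "(\<forall>n. \<forall>x\<in>X. \<forall>xstar.
            (\<forall>j<nz. is_kg_argmax X (post_mean m0 k0 s xs ys n) (post_cov k0 s xs n) s x (Zs j) (xstar j))
            \<longrightarrow> kg_h (post_mean m0 k0 s xs ys n) (post_cov k0 s xs n) s nz xstar x \<ge> 0)
       \<and> (\<forall>x\<in>X. \<forall>xstar :: nat \<Rightarrow> nat \<Rightarrow> 'a.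
            infinite {n. xs n = x}
            \<longrightarrow> (\<forall>n. \<forall>j<nz. is_kg_argmax X (post_mean m0 k0 s xs ys n) (post_cov k0 s xs n) s x (Zs j) (xstar n j))
            \<longrightarrow> (\<lambda>n. kg_h (post_mean m0 k0 s xs ys n) (post_cov k0 s xs n) s nz (xstar n) x) \<longlonglongrightarrow> 0)"

proof (intro conjI allI ballI impI)
  fix n x xstar
  assume "x \<in> X"
  show "kg_h (post_mean m0 k0 s xs ys n) (post_cov k0 s xs n) s nz xstar x \<ge> 0"
  proof -
    have "\<forall>j<nz. \<bar>sigt (post_cov k0 s xs n) s (xstar j) x\<bar> \<le> (\<Sum>j<nz. \<bar>sigt (post_cov k0 s xs n) s (xstar j) x\<bar>)"
      by (auto intro: member_le_sum)
    then show ?thesis unfolding kg_h_def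
      using kg_core(1)[of nz "\<lambda>j. sigt (post_cov k0 s xs n) s (xstar j) x" "\<Sum>j<nz. \<bar>sigt (post_cov k0 s xs n) s (xstar j) x\<bar>"
        "\<lambda>j. post_mean m0 k0 s xs ys n (xstar j)"] nz by simp
  qed
next
  fix x and xstar :: "nat \<Rightarrow> nat \<Rightarrow> 'a"
  assume x: "x \<in> X" and inf: "infinite {n. xs n = x}"
    and am: "\<forall>n. \<forall>j<nz. is_kg_argmax X (post_mean m0 k0 s xs ys n) (post_cov k0 s xs n) s x (Zs j) (xstar n j)"
  have cont: "continuous_on X (\<lambda>a. k0 a a)"
  proof -
    have "continuous_on X ((\<lambda>(a, b). k0 a b) \<circ> (\<lambda>a. (a, a)))"
      by (rule continuous_on_compose[OF _ continuous_on_subset[OF k0_cont]])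
         (auto intro!: continuous_intros)
    then show ?thesis by (simp add: o_def)
  qed
  have "bounded ((\<lambda>a. k0 a a) ` X)" by (intro compact_imp_bounded compact_continuous_image cont X)
  then obtain Bd0 where Bd0: "\<forall>a\<in>X. \<bar>k0 a a\<bar> \<le> Bd0" by (auto simp: bounded_real)
  define Bd where "Bd = max Bd0 0"
  have Bd: "\<forall>a\<in>X. k0 a a \<le> Bd" "Bd \<ge> 0" using Bd0 unfolding Bd_def by fastforce+
  define e where "e n = sqrt (Bd * post_cov k0 s xs n x x) / sqrt s" for n
  have up: "kg_h (post_mean m0 k0 s xs ys n) (post_cov k0 s xs n) s nz (xstar n) x \<le> e n * sqrt (2 / pi)" for n
  proof -
    have "\<forall>j<nz. \<bar>sigt (post_cov k0 s xs n) s (xstar n j) x\<bar> \<le> e n"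
    proof (intro allI impI)
      fix j assume "j < nz"
      then have "xstar n j \<in> X" using am unfolding is_kg_argmax_def by blast
      then show "\<bar>sigt (post_cov k0 s xs n) s (xstar n j) x\<bar> \<le> e n"
        unfolding e_def using sigt_bound[OF k0_pos noise xs_X x _ Bd] by blast
    qed
    then show ?thesis unfolding kg_h_def
      using kg_core(2)[of nz "\<lambda>j. sigt (post_cov k0 s xs n) s (xstar n j) x" "e n"
        "\<lambda>j. post_mean m0 k0 s xs ys n (xstar n j)"] nz by simp
  qed
  have lo: "kg_h (post_mean m0 k0 s xs ys n) (post_cov k0 s xs n) s nz (xstar n) x \<ge> 0" for n
  proof -
    have "\<forall>j<nz. \<bar>sigt (post_cov k0 s xs n) s (xstar n j) x\<bar> \<le> (\<Sum>j<nz. \<bar>sigt (post_cov k0 s xs n) s (xstar n j) x\<bar>)"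
      by (auto intro: member_le_sum)
    then show ?thesis unfolding kg_h_def
      using kg_core(1)[of nz "\<lambda>j. sigt (post_cov k0 s xs n) s (xstar n j) x" "\<Sum>j<nz. \<bar>sigt (post_cov k0 s xs n) s (xstar n j) x\<bar>"
        "\<lambda>j. post_mean m0 k0 s xs ys n (xstar n j)"] nz by simp
  qed
  have t0: "(\<lambda>n. post_cov k0 s xs n x x) \<longlonglongrightarrow> 0" by (rule var_to_0[OF k0_pos noise xs_X x inf])
  have t1: "(\<lambda>n. Bd * post_cov k0 s xs n x x) \<longlonglongrightarrow> 0"
    by (rule tendsto_mult_right_zero[OF t0])
  have t2: "(\<lambda>n. sqrt (Bd * post_cov k0 s xs n x x)) \<longlonglongrightarrow> sqrt 0"
    by (rule tendsto_real_sqrt[OF t1])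
  have t3: "(\<lambda>n. sqrt (Bd * post_cov k0 s xs n x x) / sqrt s) \<longlonglongrightarrow> 0"
    by (rule tendsto_divide_zero) (use t2 in simp)
  have t4: "(\<lambda>n. e n * sqrt (2 / pi)) \<longlonglongrightarrow> 0"
    unfolding e_def by (rule tendsto_mult_left_zero[OF t3])
  have ev1: "\<forall>\<^sub>F n in sequentially. 0 \<le> kg_h (post_mean m0 k0 s xs ys n) (post_cov k0 s xs n) s nz (xstar n) x"
    using lo by (intro always_eventually allI)
  have ev2: "\<forall>\<^sub>F n in sequentially. kg_h (post_mean m0 k0 s xs ys n) (post_cov k0 s xs n) s nz (xstar n) x \<le> e n * sqrt (2 / pi)"
    using up by (intro always_eventually allI)
  show "(\<lambda>n. kg_h (post_mean m0 k0 s xs ys n) (post_cov k0 s xs n) s nz (xstar n) x) \<longlonglongrightarrow> 0"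
    by (rule tendsto_sandwich[OF ev1 ev2 tendsto_const t4])
qed

end
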